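(* Let $G$ be a directed graph on vertex set $V$, $|V|=n$, with edge weights in $\{1,\dots,M\}$, let $C>0$, and let $\pi:V\to[n]$ be a bijection such that $\pi(w(u,v))\le CMn\ln n/\|uv\|$ for all $u,v$ with $2\le|uv|<\infty$. Let $r\ge1$ and $\mathcal{H}_r=\{z\in V:\pi(z)\le CMn\ln n/r\}$. Define $A[u,z]=\|uz\|$ if $\|uz\|\le 2r$ and $u\ne z$, else $+\infty$ ($u\in V$, $z\in\mathcal{H}_r$), and $B[z,v]=\|zv\|$ if $\|zv\|\le 2r$ and $z\ne v$, else $+\infty$. Then for all $u,v\in V$ with $r\le\|uv\|<2r$: if $|uv|=1$, no $z\in\mathcal{H}_r$ satisfies $A[u,z]+B[z,v]=\|uv\|$; if $|uv|\ge2$, the vertex $z\in\mathcal{H}_r$ minimizing $\pi(z)$ subject to $A[u,z]+B[z,v]=\|uv\|$ exists and equals $w(u,v)$.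
   Context: $\|uv\|$ is the shortest path distance from $u$ to $v$; $|uv|$ is the largest number of edges in any shortest $u\to v$ path ($\infty$ if unreachable). For $2\le|uv|<\infty$, $w(u,v)$ is the vertex $w\notin\{u,v\}$ with $\|uv\|=\|uw\|+\|wv\|$ minimizing $\pi(w)$. *)

theory Defs
  imports "HOL-Analysis.Analysis" "HOL-Library.Extended_Real"
begin

definition is_path :: "('a \<times> 'a) set \<Rightarrow> 'a \<Rightarrow> 'a list \<Rightarrow> 'a \<Rightarrow> bool" where
  "is_path E u xs v \<longleftrightarrow> xs \<noteq> [] \<and> hd xs = u \<and> last xs = v \<and>
     (\<forall>i < length xs - 1. (xs ! i, xs ! (i+1)) \<in> E)"

definition path_weight :: "('a \<Rightarrow> 'a \<Rightarrow> nat) \<Rightarrow> 'a list \<Rightarrow> nat" where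
  "path_weight wt xs = (\<Sum>i < length xs - 1. wt (xs ! i) (xs ! (i+1)))"

definition spdist :: "('a \<times> 'a) set \<Rightarrow> ('a \<Rightarrow> 'a \<Rightarrow> nat) \<Rightarrow> 'a \<Rightarrow> 'a \<Rightarrow> ereal" where
  "spdist E wt u v = (INF xs \<in> {xs. is_path E u xs v}. ereal (real (path_weight wt xs)))"

definition shortest_paths :: "('a \<times> 'a) set \<Rightarrow> ('a \<Rightarrow> 'a \<Rightarrow> nat) \<Rightarrow> 'a \<Rightarrow> 'a \<Rightarrow> 'a list set" where
  "shortest_paths E wt u v =
     {xs. is_path E u xs v \<and> ereal (real (path_weight wt xs)) = spdist E wt u v}"

definition hops :: "('a \<times> 'a) set \<Rightarrow> ('a \<Rightarrow> 'a \<Rightarrow> nat) \<Rightarrow> 'a \<Rightarrow> 'a \<Rightarrow> enat" where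
  "hops E wt u v = (if shortest_paths E wt u v = {} then \<infinity>
      else (SUP xs \<in> shortest_paths E wt u v. enat (length xs - 1)))"

text \<open>w(u,v): vertex w not in {u,v} on a shortest u-v path minimizing pi(w).\<close>
definition wvert :: "'a set \<Rightarrow> ('a \<times> 'a) set \<Rightarrow> ('a \<Rightarrow> 'a \<Rightarrow> nat) \<Rightarrow> ('a \<Rightarrow> nat) \<Rightarrow> 'a \<Rightarrow> 'a \<Rightarrow> 'a" where
  "wvert V E wt \<pi> u v = arg_min_on \<pi>
     {w \<in> V. w \<noteq> u \<and> w \<noteq> v \<and> spdist E wt u v = spdist E wt u w + spdist E wt w v}"

end

theory Submission imports Defs begin
lemma is_path_single: "is_path E u [x] v \<longleftrightarrow> x = u \<and> x = v"
  by (auto simp: is_path_def)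

lemma is_path_Nil: "\<not> is_path E u [] v" by (simp add: is_path_def)

lemma is_path_Cons2: "is_path E u (x#y#xs) v \<longleftrightarrow> x = u \<and> (x,y) \<in> E \<and> is_path E y (y#xs) v"
  by (auto simp: is_path_def less_Suc_eq_0_disj)

lemma path_weight_single: "path_weight wt [x] = 0" by (simp add: path_weight_def)

lemma path_weight_Cons2: "path_weight wt (x#y#xs) = wt x y + path_weight wt (y#xs)"
proof -
  have e: "length (x#y#xs) - 1 = Suc (length (y#xs) - 1)" by simp
  show ?thesis unfolding path_weight_def e sum.lessThan_Suc_shift by simp
qed

lemma path_append:
  "is_path E u xs z \<Longrightarrow> is_path E z ys v \<Longrightarrow>
   is_path E u (xs @ tl ys) v \<and> path_weight wt (xs @ tl ys) = path_weight wt xs + path_weight wt ys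
   \<and> length (xs @ tl ys) = length xs + length ys - 1"
proof (induction xs arbitrary: u)
  case Nil then show ?case by (simp add: is_path_Nil)
next
  case (Cons a xs')
  show ?case
  proof (cases xs')
    case Nil
    with Cons.prems have "a = u" "a = z" by (auto simp: is_path_single)
    moreover obtain y ys' where "ys = y # ys'" using Cons.prems(2) by (cases ys) (auto simp: is_path_Nil)
    moreover have "y = z" using Cons.prems(2) calculation by (simp add: is_path_def)
    ultimately show ?thesis using Cons.prems Nil by (simp add: path_weight_single)
  next
    case (Cons b xs'')
    with Cons.prems have h: "a = u" "(a,b) \<in> E" "is_path E b (b#xs'') z" by (auto simp: is_path_Cons2)
    from Cons.IH[OF _ Cons.prems(2)] h Cons have IH: "is_path E b ((b#xs'') @ tl ys) v \<and>
      path_weight wt ((b#xs'') @ tl ys) = path_weight wt (b#xs'') + path_weight wt ys \<and>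
      length ((b#xs'') @ tl ys) = length (b#xs'') + length ys - 1" by simp
    have "ys \<noteq> []" using Cons.prems(2) by (simp add: is_path_def)
    then show ?thesis using IH h Cons by (simp add: is_path_Cons2 path_weight_Cons2)
  qed
qed

lemma path_len_le_weight:
  assumes "is_path E u xs v" "\<forall>(x,y)\<in>E. wt x y \<ge> 1"
  shows "length xs - 1 \<le> path_weight wt xs"
  using assms
proof (induction xs arbitrary: u)
  case Nil then show ?case by simp
next
  case (Cons a xs')
  show ?case
  proof (cases xs')
    case Nil then show ?thesis by simp
  next
    case (Cons b xs'')
    with Cons.prems have h: "(a,b) \<in> E" "is_path E b (b#xs'') v" by (auto simp: is_path_Cons2)
    with Cons.IH[of b] Cons Cons.prems have "length (b#xs'') - 1 \<le> path_weight wt (b#xs'')" by simp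
    moreover have "wt a b \<ge> 1" using h Cons.prems by auto
    ultimately show ?thesis using Cons by (simp add: path_weight_Cons2)
  qed
qed

lemma spdist_le: "is_path E u xs v \<Longrightarrow> spdist E wt u v \<le> ereal (real (path_weight wt xs))"
  unfolding spdist_def by (rule INF_lower) simp

lemma spdist_nonneg: "0 \<le> spdist E wt u v"
  unfolding spdist_def by (rule INF_greatest) simp

lemma spdist_nopath: "\<not> (\<exists>xs. is_path E u xs v) \<Longrightarrow> spdist E wt u v = \<infinity>"
  unfolding spdist_def by (simp add: top_ereal_def)

lemma spdist_self: "spdist E wt u u = 0"
  using spdist_le[of E u "[u]" u wt] spdist_nonneg[of E wt u u]
  by (simp add: is_path_single path_weight_single zero_ereal_def antisym)

lemma spdist_attain:
  assumes "\<exists>xs. is_path E u xs v"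
  shows "\<exists>xs. is_path E u xs v \<and> spdist E wt u v = ereal (real (path_weight wt xs))"
proof -
  define P where "P k \<longleftrightarrow> (\<exists>xs. is_path E u xs v \<and> path_weight wt xs = k)" for k
  define m where "m = (LEAST k. P k)"
  have "\<exists>k. P k" using assms P_def by blast
  then have "P m" unfolding m_def by (rule LeastI_ex)
  then obtain xs where xs: "is_path E u xs v" "path_weight wt xs = m" using P_def by blast
  have "spdist E wt u v \<ge> ereal (real m)"
    unfolding spdist_def
  proof (rule INF_greatest)
    fix ys assume "ys \<in> {xs. is_path E u xs v}"
    then have "P (path_weight wt ys)" using P_def by blast
    then have "m \<le> path_weight wt ys" unfolding m_def by (rule Least_le)
    then show "ereal (real m) \<le> ereal (real (path_weight wt ys))" by simp
  qed
  moreover have "spdist E wt u v \<le> ereal (real m)" using spdist_le[OF xs(1), of wt] xs(2) by simp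
  ultimately show ?thesis using xs by (intro exI[of _ xs]) auto
qed

lemma spdist_fin_attain:
  assumes "spdist E wt u v \<noteq> \<infinity>"
  shows "\<exists>xs. is_path E u xs v \<and> spdist E wt u v = ereal (real (path_weight wt xs))"
  using assms spdist_nopath spdist_attain by metis

lemma spdist_tri: "spdist E wt u v \<le> spdist E wt u z + spdist E wt z v"
proof (cases "spdist E wt u z = \<infinity> \<or> spdist E wt z v = \<infinity>")
  case True
  then show ?thesis using spdist_nonneg[of E wt u z] spdist_nonneg[of E wt z v] by auto
next
  case False
  then obtain p q where p: "is_path E u p z" "spdist E wt u z = ereal (real (path_weight wt p))"
    and q: "is_path E z q v" "spdist E wt z v = ereal (real (path_weight wt q))"
    using spdist_fin_attain by metis
  from path_append[OF p(1) q(1), of wt] have "is_path E u (p @ tl q) v"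
    "path_weight wt (p @ tl q) = path_weight wt p + path_weight wt q" by auto
  then show ?thesis using spdist_le[of E u "p @ tl q" v wt] p q by simp
qed

lemma AB_eq:
  assumes A_def: "\<forall>u z. A u z = (if spdist E wt u z \<le> ereal (2 * r) \<and> u \<noteq> z
                                then spdist E wt u z else \<infinity>)"
    and B_def: "\<forall>z v. B z v = (if spdist E wt z v \<le> ereal (2 * r) \<and> z \<noteq> v
                                then spdist E wt z v else \<infinity>)"
    and d: "spdist E wt u v = ereal d"
    and eq: "A u z + B z v = spdist E wt u v"
  shows "u \<noteq> z \<and> z \<noteq> v \<and> spdist E wt u z + spdist E wt z v = spdist E wt u v"
proof -
  have n1: "A u z \<noteq> -\<infinity>" "B z v \<noteq> -\<infinity>"
    using A_def B_def spdist_nonneg[of E wt u z] spdist_nonneg[of E wt z v] by auto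
  have "A u z \<noteq> \<infinity>" using eq d n1 by auto
  moreover have "B z v \<noteq> \<infinity>" using eq d n1 by auto
  ultimately show ?thesis using A_def B_def eq by (auto split: if_splits)
qed

theorem mainTheorem10:
  fixes V :: "'a set" and E :: "('a \<times> 'a) set" and wt :: "'a \<Rightarrow> 'a \<Rightarrow> nat"
    and M :: nat and C :: real and \<pi> :: "'a \<Rightarrow> nat" and r :: real
    and Hr :: "'a set" and A B :: "'a \<Rightarrow> 'a \<Rightarrow> ereal"
  assumes finV: "finite V"
    and EV: "E \<subseteq> V \<times> V"
    and wts: "\<forall>(x, y) \<in> E. wt x y \<in> {1..M}"
    and Cpos: "C > 0"
    and pibij: "bij_betw \<pi> V {1..card V}"
    and hub: "\<forall>u \<in> V. \<forall>v \<in> V. 2 \<le> hops E wt u v \<and> hops E wt u v < \<infinity> \<longrightarrow>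
        ereal (real (\<pi> (wvert V E wt \<pi> u v)))
          \<le> ereal (C * real M * real (card V) * ln (real (card V))) / spdist E wt u v"
    and r1: "r \<ge> 1"
    and Hr_def: "Hr = {z \<in> V. real (\<pi> z) \<le> C * real M * real (card V) * ln (real (card V)) / r}"
    and A_def: "\<forall>u z. A u z = (if spdist E wt u z \<le> ereal (2 * r) \<and> u \<noteq> z
                                then spdist E wt u z else \<infinity>)"
    and B_def: "\<forall>z v. B z v = (if spdist E wt z v \<le> ereal (2 * r) \<and> z \<noteq> v
                                then spdist E wt z v else \<infinity>)"
  shows "\<forall>u \<in> V. \<forall>v \<in> V. ereal r \<le> spdist E wt u v \<and> spdist E wt u v < ereal (2 * r) \<longrightarrow>
           (hops E wt u v = 1 \<longrightarrow> \<not> (\<exists>z \<in> Hr. A u z + B z v = spdist E wt u v)) \<and>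
           (hops E wt u v \<ge> 2 \<longrightarrow>
              (let w = wvert V E wt \<pi> u v in
                 w \<in> Hr \<and> A u w + B w v = spdist E wt u v \<and>
                 (\<forall>z \<in> Hr. A u z + B z v = spdist E wt u v \<longrightarrow> \<pi> w \<le> \<pi> z)))"
proof (intro ballI impI)
  fix u v assume uV: "u \<in> V" and vV: "v \<in> V"
    and rng: "ereal r \<le> spdist E wt u v \<and> spdist E wt u v < ereal (2 * r)"
  define X where "X = C * real M * real (card V) * ln (real (card V))"
  have w1: "\<forall>(x,y)\<in>E. wt x y \<ge> 1" using wts by auto
  have "spdist E wt u v \<noteq> \<infinity>" using rng by auto
  then obtain p where p: "is_path E u p v" "spdist E wt u v = ereal (real (path_weight wt p))"
    using spdist_fin_attain by metis
  define d where "d = path_weight wt p"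
  have sd: "spdist E wt u v = ereal (real d)" using p d_def by simp
  have rd: "r \<le> real d" using rng sd by simp
  have "u \<noteq> v" using rd r1 sd spdist_self[of E wt u] by auto
  have pSP: "p \<in> shortest_paths E wt u v" using p unfolding shortest_paths_def by simp
  have hops_eq: "hops E wt u v = (SUP xs \<in> shortest_paths E wt u v. enat (length xs - 1))"
    using pSP unfolding hops_def by auto
  have SPlen: "length q - 1 \<le> d" if "q \<in> shortest_paths E wt u v" for q
  proof -
    have "is_path E u q v" "ereal (real (path_weight wt q)) = ereal (real d)"
      using that sd unfolding shortest_paths_def by auto
    then show ?thesis using path_len_le_weight[OF _ w1] by fastforce
  qed
  have hops_fin: "hops E wt u v < \<infinity>"
  proof -
    have "hops E wt u v \<le> enat d" unfolding hops_eq
      by (rule SUP_least) (use SPlen in auto)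
    then show ?thesis using order.strict_trans1[of _ "enat d" \<infinity>] by simp
  qed
  have P1: "(hops E wt u v = 1 \<longrightarrow> \<not> (\<exists>z \<in> Hr. A u z + B z v = spdist E wt u v))"
  proof (intro impI notI)
    assume h1: "hops E wt u v = 1"
    assume "\<exists>z \<in> Hr. A u z + B z v = spdist E wt u v"
    then obtain z where "A u z + B z v = spdist E wt u v" by blast
    from AB_eq[OF A_def B_def sd this] have z: "u \<noteq> z" "z \<noteq> v"
      "spdist E wt u z + spdist E wt z v = spdist E wt u v" by auto
    have "spdist E wt u z \<noteq> \<infinity>" "spdist E wt z v \<noteq> \<infinity>" using z(3) sd by auto
    then obtain p1 p2 where p1: "is_path E u p1 z" "spdist E wt u z = ereal (real (path_weight wt p1))"
      and p2: "is_path E z p2 v" "spdist E wt z v = ereal (real (path_weight wt p2))"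
      using spdist_fin_attain by metis
    from path_append[OF p1(1) p2(1), of wt] have q: "is_path E u (p1 @ tl p2) v"
      "path_weight wt (p1 @ tl p2) = path_weight wt p1 + path_weight wt p2"
      "length (p1 @ tl p2) = length p1 + length p2 - 1" by auto
    have "length p1 \<ge> 2"
    proof (rule ccontr)
      assume "\<not> ?thesis"
      then have "length p1 = 0 \<or> length p1 = 1" by linarith
      then show False using p1(1) z(1) by (auto simp: is_path_def length_Suc_conv)
    qed
    moreover have "length p2 \<ge> 2"
    proof (rule ccontr)
      assume "\<not> ?thesis"
      then have "length p2 = 0 \<or> length p2 = 1" by linarith
      then show False using p2(1) z(2) by (auto simp: is_path_def length_Suc_conv)
    qed
    ultimately have len: "length (p1 @ tl p2) - 1 \<ge> 2" using q(3) by simp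
    have "p1 @ tl p2 \<in> shortest_paths E wt u v"
      unfolding shortest_paths_def using q p1 p2 z(3) by simp
    then have "enat (length (p1 @ tl p2) - 1) \<le> hops E wt u v"
      unfolding hops_eq by (rule SUP_upper)
    then show False using h1 len
      by (metis enat_ord_simps(1) numeral_le_one_iff one_enat_def order_trans semiring_norm(69) enat_numeral)
  qed
  have P2: "hops E wt u v \<ge> 2 \<longrightarrow>
              (let w = wvert V E wt \<pi> u v in
                 w \<in> Hr \<and> A u w + B w v = spdist E wt u v \<and>
                 (\<forall>z \<in> Hr. A u z + B z v = spdist E wt u v \<longrightarrow> \<pi> w \<le> \<pi> z))"
  proof
    assume h2: "hops E wt u v \<ge> 2"
    have "\<exists>q \<in> shortest_paths E wt u v. length q - 1 \<ge> 2"
    proof (rule ccontr)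
      assume "\<not> ?thesis"
      then have "hops E wt u v \<le> 1" unfolding hops_eq
        by (intro SUP_least) (auto simp: one_enat_def)
      then show False using h2 by (metis numeral_le_one_iff order_trans semiring_norm(69))
    qed
    then obtain q where qSP: "q \<in> shortest_paths E wt u v" and ql: "length q - 1 \<ge> 2" by blast
    obtain x0 w rest where qe: "q = x0 # w # rest" and rne: "rest \<noteq> []"
    proof -
      have "Suc (Suc (Suc 0)) \<le> length q" using ql by simp
      then obtain x0 w rest where "q = x0 # w # rest" "Suc 0 \<le> length rest"
        by (auto simp: Suc_le_length_iff)
      then show ?thesis using that by (cases rest) auto
    qed
    have qp: "is_path E u q v" and qw: "path_weight wt q = d"
      using qSP sd unfolding shortest_paths_def by auto
    then have e: "x0 = u" "(u,w) \<in> E" "is_path E w (w#rest) v" using qe by (auto simp: is_path_Cons2)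
    have pw: "path_weight wt q = wt u w + path_weight wt (w#rest)" using qe e by (simp add: path_weight_Cons2)
    have wV: "w \<in> V" using e EV by auto
    have a1: "wt u w \<ge> 1" using e w1 by auto
    have b1: "path_weight wt (w#rest) \<ge> 1" using path_len_le_weight[OF e(3) w1] rne
      by (metis One_nat_def diff_Suc_1 le_trans length_Cons length_greater_0_conv less_eq_Suc_le)
    have "is_path E u [u,w] w" using e by (simp add: is_path_Cons2 is_path_single)
    then have s1: "spdist E wt u w \<le> ereal (real (wt u w))"
      using spdist_le[of E u "[u,w]" w wt] by (simp add: path_weight_Cons2 path_weight_single)
    have s2: "spdist E wt w v \<le> ereal (real (path_weight wt (w#rest)))" using spdist_le[OF e(3)] .
    have tri: "spdist E wt u v \<le> spdist E wt u w + spdist E wt w v" by (rule spdist_tri)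
    have n1: "spdist E wt u w \<ge> 0" "spdist E wt w v \<ge> 0" by (simp_all add: spdist_nonneg)
    obtain a where a: "spdist E wt u w = ereal a" using s1 n1 by (cases "spdist E wt u w") auto
    obtain b where b: "spdist E wt w v = ereal b" using s2 n1 by (cases "spdist E wt w v") auto
    have "a \<le> wt u w" "b \<le> path_weight wt (w#rest)" "real d \<le> a + b"
      using s1 s2 tri a b sd by auto
    then have ab: "a = wt u w" "b = path_weight wt (w#rest)"
      using pw qw by linarith+
    have wu: "w \<noteq> u" using a ab a1 spdist_self[of E wt u] by auto
    have wv: "w \<noteq> v" using b ab b1 spdist_self[of E wt v] by auto
    have weq: "spdist E wt u v = spdist E wt u w + spdist E wt w v"
      using a b ab sd pw qw by simp
    define S where "S = {w \<in> V. w \<noteq> u \<and> w \<noteq> v \<and> spdist E wt u v = spdist E wt u w + spdist E wt w v}"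
    have wS: "w \<in> S" using wV wu wv weq S_def by simp
    have finS: "finite S" using finV S_def by simp
    define wm where "wm = wvert V E wt \<pi> u v"
    have wm_def2: "wm = arg_min_on \<pi> S" unfolding wm_def wvert_def S_def by simp
    have wmS: "wm \<in> S" using arg_min_if_finite(1)[OF finS] wS wm_def2 by blast
    have wmmin: "\<pi> wm \<le> \<pi> z" if "z \<in> S" for z
      using arg_min_least[OF finS _ that, of \<pi>] wm_def2 that by auto
    have wmV: "wm \<in> V" "wm \<noteq> u" "wm \<noteq> v"
      and wmeq: "spdist E wt u v = spdist E wt u wm + spdist E wt wm v" using wmS S_def by auto
    have "ereal (real (\<pi> wm)) \<le> ereal X / spdist E wt u v"
      using hub uV vV h2 hops_fin unfolding wm_def X_def by blast
    moreover have "real d \<noteq> 0" using rd r1 by simp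
    ultimately have pile: "real (\<pi> wm) \<le> X / real d" using sd by simp
    have "card V \<ge> 1" using uV finV card_0_eq by fastforce
    then have X0: "X \<ge> 0" unfolding X_def using Cpos by simp
    have "X / real d \<le> X / r" using X0 rd r1 by (intro divide_left_mono) auto
    with pile have wmH: "wm \<in> Hr" using Hr_def wmV X_def by simp
    have nwm: "spdist E wt u wm \<ge> 0" "spdist E wt wm v \<ge> 0" by (simp_all add: spdist_nonneg)
    have "spdist E wt u wm \<le> spdist E wt u v" using wmeq nwm
      by (metis add_increasing2 order_refl)
    then have le1: "spdist E wt u wm \<le> ereal (2*r)" using rng by auto
    have "spdist E wt wm v \<le> spdist E wt u v" using wmeq nwm
      by (metis add_increasing order_refl)
    then have le2: "spdist E wt wm v \<le> ereal (2*r)" using rng by auto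
    have ABw: "A u wm + B wm v = spdist E wt u v"
      using A_def B_def le1 le2 wmV wmeq by simp
    have mins: "\<forall>z \<in> Hr. A u z + B z v = spdist E wt u v \<longrightarrow> \<pi> wm \<le> \<pi> z"
    proof (intro ballI impI)
      fix z assume zH: "z \<in> Hr" and zeq: "A u z + B z v = spdist E wt u v"
      from AB_eq[OF A_def B_def sd zeq] zH Hr_def have "z \<in> S" unfolding S_def by auto
      then show "\<pi> wm \<le> \<pi> z" by (rule wmmin)
    qed
    show "let w = wvert V E wt \<pi> u v in
                 w \<in> Hr \<and> A u w + B w v = spdist E wt u v \<and>
                 (\<forall>z \<in> Hr. A u z + B z v = spdist E wt u v \<longrightarrow> \<pi> w \<le> \<pi> z)"
      unfolding Let_def wm_def[symmetric] using wmH ABw mins by blast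
  qed
  show "(hops E wt u v = 1 \<longrightarrow> \<not> (\<exists>z \<in> Hr. A u z + B z v = spdist E wt u v)) \<and>
           (hops E wt u v \<ge> 2 \<longrightarrow>
              (let w = wvert V E wt \<pi> u v in
                 w \<in> Hr \<and> A u w + B w v = spdist E wt u v \<and>
                 (\<forall>z \<in> Hr. A u z + B z v = spdist E wt u v \<longrightarrow> \<pi> w \<le> \<pi> z)))"
    using P1 P2 by blast
qed

end
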